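(* Let $A$ be a finite-dimensional complex Hilbert space. Every doubly mixed vector $\Psi\in A^{\otimes 4}$ is doubly dilated.
   Context: Fix an orthonormal basis $e_1,\dots,e_d$ of $A$ (identifying $\overline{A}$ with $A$ via this basis) and identify $\Psi\in A^{\otimes 4}$ with its coefficient array $\Psi(a_1,a_2,a_3,a_4)$ with respect to $e_{a_1}\otimes e_{a_2}\otimes e_{a_3}\otimes e_{a_4}$. Doubly mixed: $\Psi$ is doubly mixed if there are finitely many indices $k=1,\dots,m$, a probability distribution $(r_k)_k$, for each $k$ finitely many unit vectors $\phi_{k1},\dots,\phi_{kn_k}\in A$ and a probability distribution $(p_{ki})_{i}$, such that, writing $\rho_k(a,b)=\sum_{i=1}^{n_k}p_{ki}\,\phi_{ki}(a)\overline{\phi_{ki}(b)}$ (where $\phi(a)$ is the $a$-th coordinate of $\phi$), we have $\Psi(a_1,a_2,a_3,a_4)=\sum_{k=1}^m r_k\,\rho_k(a_1,a_2)\,\rho_k(a_3,a_4)$ for all indices. Doubly dilated: $\Psi$ is doubly dilated if there are finite nonempty index sets $I_B, I_C$ and an arbitrary complex array $\psi(a,i,k)$ ($a\in\{1,\dots,d\}$, $i\in I_B$, $k\in I_C$), i.e. a vector in $A\otimes B\otimes C$ for finite-dimensional spaces $B,C$ with bases indexed by $I_B,I_C$, such that $\Psi(a_1,a_2,a_3,a_4)=\sum_{k,l\in I_C}\sum_{i,j\in I_B}\psi(a_1,i,k)\,\overline{\psi(a_2,i,l)}\,\psi(a_3,j,l)\,\overline{\psi(a_4,j,k)}$ for all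 indices. *)

theory Defs
  imports "HOL-Analysis.Analysis"
begin

text \<open>A is C^d with orthonormal basis indexed by {0..<d}. Vectors of A are coefficient
  functions nat => complex (only indices < d matter); a 4-tensor Psi in A^{(x)4} is its
  coefficient array, only entries with all indices < d matter.\<close>

definition unit_vec :: "nat \<Rightarrow> (nat \<Rightarrow> complex) \<Rightarrow> bool" where
  "unit_vec d \<phi> \<longleftrightarrow> (\<Sum>a<d. (cmod (\<phi> a))\<^sup>2) = 1"

definition doubly_mixed :: "nat \<Rightarrow> (nat \<Rightarrow> nat \<Rightarrow> nat \<Rightarrow> nat \<Rightarrow> complex) \<Rightarrow> bool" where
  "doubly_mixed d \<Psi> \<longleftrightarrow>
    (\<exists>(m::nat) (r::nat \<Rightarrow> real) (n::nat \<Rightarrow> nat) (\<phi>::nat \<Rightarrow> nat \<Rightarrow> nat \<Rightarrow> complex)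
        (p::nat \<Rightarrow> nat \<Rightarrow> real).
      m \<ge> 1 \<and> (\<forall>k<m. r k \<ge> 0) \<and> (\<Sum>k<m. r k) = 1 \<and>
      (\<forall>k<m. n k \<ge> 1 \<and> (\<forall>i<n k. p k i \<ge> 0 \<and> unit_vec d (\<phi> k i)) \<and> (\<Sum>i<n k. p k i) = 1) \<and>
      (let \<rho> = (\<lambda>k a b. \<Sum>i<n k. complex_of_real (p k i) * \<phi> k i a * cnj (\<phi> k i b)) in
        \<forall>a1<d. \<forall>a2<d. \<forall>a3<d. \<forall>a4<d.
          \<Psi> a1 a2 a3 a4 = (\<Sum>k<m. complex_of_real (r k) * \<rho> k a1 a2 * \<rho> k a3 a4)))"

definition doubly_dilated :: "nat \<Rightarrow> (nat \<Rightarrow> nat \<Rightarrow> nat \<Rightarrow> nat \<Rightarrow> complex) \<Rightarrow> bool" where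
  "doubly_dilated d \<Psi> \<longleftrightarrow>
    (\<exists>(IB::nat set) (IC::nat set) (\<psi>::nat \<Rightarrow> nat \<Rightarrow> nat \<Rightarrow> complex).
      finite IB \<and> IB \<noteq> {} \<and> finite IC \<and> IC \<noteq> {} \<and>
      (\<forall>a1<d. \<forall>a2<d. \<forall>a3<d. \<forall>a4<d.
         \<Psi> a1 a2 a3 a4 =
           (\<Sum>k\<in>IC. \<Sum>l\<in>IC. \<Sum>i\<in>IB. \<Sum>j\<in>IB.
              \<psi> a1 i k * cnj (\<psi> a2 i l) * \<psi> a3 j l * cnj (\<psi> a4 j k))))"

end

theory Submission
  imports Defs
begin

theorem theorem2:
  fixes d :: nat and \<Psi> :: "nat \<Rightarrow> nat \<Rightarrow> nat \<Rightarrow> nat \<Rightarrow> complex"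
  assumes "doubly_mixed d \<Psi>"
  shows "doubly_dilated d \<Psi>"
proof -
  obtain m :: nat and r :: "nat \<Rightarrow> real" and n :: "nat \<Rightarrow> nat" and p :: "nat \<Rightarrow> nat \<Rightarrow> real" and \<phi> :: "nat \<Rightarrow> nat \<Rightarrow> nat \<Rightarrow> complex" where m: "m \<ge> 1" and rpos: "\<forall>k<m. r k \<ge> 0" and
    np: "\<forall>k<m. n k \<ge> 1 \<and> (\<forall>i<n k. p k i \<ge> 0 \<and> unit_vec d (\<phi> k i)) \<and> (\<Sum>i<n k. p k i) = 1" and
    eq: "\<forall>a1<d. \<forall>a2<d. \<forall>a3<d. \<forall>a4<d.
          \<Psi> a1 a2 a3 a4 = (\<Sum>k<m. complex_of_real (r k) *
             (\<Sum>i<n k. complex_of_real (p k i) * \<phi> k i a1 * cnj (\<phi> k i a2)) *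
             (\<Sum>i<n k. complex_of_real (p k i) * \<phi> k i a3 * cnj (\<phi> k i a4)))"
    using assms unfolding doubly_mixed_def Let_def by blast
  define \<rho> where "\<rho> k a b = (\<Sum>i<n k. complex_of_real (p k i) * \<phi> k i a * cnj (\<phi> k i b))" for k a b
  define M where "M = (\<Sum>k<m. n k)"
  have nM: "n k \<le> M" if "k < m" for k
    unfolding M_def using that by (intro member_le_sum) auto
  define s where "s k i = sqrt (sqrt (r k) * p k i)" for k i
  define \<psi> where "\<psi> a b c = (case prod_decode b of (k', i') \<Rightarrow>
       if c = k' \<and> i' < n k' then complex_of_real (s k' i') * \<phi> k' i' a else 0)" for a b c
  define IB where "IB = prod_encode ` ({..<m} \<times> {..<M})"
  have key: "(\<Sum>b\<in>IB. \<psi> a b k * cnj (\<psi> a' b l)) =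
      (if k = l then complex_of_real (sqrt (r k)) * \<rho> k a a' else 0)" if kl: "k < m" "l < m" for a a' k l
  proof -
    have "(\<Sum>b\<in>IB. \<psi> a b k * cnj (\<psi> a' b l)) =
        (\<Sum>x\<in>{..<m} \<times> {..<M}. \<psi> a (prod_encode x) k * cnj (\<psi> a' (prod_encode x) l))"
      unfolding IB_def by (subst sum.reindex) (auto intro: inj_onI simp: prod_encode_eq)
    also have "\<dots> = (\<Sum>k'<m. \<Sum>i'<M. \<psi> a (prod_encode (k',i')) k * cnj (\<psi> a' (prod_encode (k',i')) l))"
      by (simp add: sum.cartesian_product)
    also have "\<dots> = (\<Sum>k'<m. if k' = k then (\<Sum>i'<M. \<psi> a (prod_encode (k,i')) k * cnj (\<psi> a' (prod_encode (k,i')) l)) else 0)"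
      by (intro sum.cong refl) (auto simp: \<psi>_def)
    also have "\<dots> = (\<Sum>i'<M. \<psi> a (prod_encode (k,i')) k * cnj (\<psi> a' (prod_encode (k,i')) l))"
      using kl by simp
    also have "\<dots> = (if k = l then complex_of_real (sqrt (r k)) * \<rho> k a a' else 0)"
    proof (cases "k = l")
      case True
      have "(\<Sum>i'<M. \<psi> a (prod_encode (k,i')) k * cnj (\<psi> a' (prod_encode (k,i')) l))
          = (\<Sum>i'<M. if i' < n k then complex_of_real (sqrt (r k)) * (complex_of_real (p k i') * \<phi> k i' a * cnj (\<phi> k i' a')) else 0)"
      proof (intro sum.cong refl)
        fix i' assume "i' \<in> {..<M}"
        show "\<psi> a (prod_encode (k,i')) k * cnj (\<psi> a' (prod_encode (k,i')) l) =
          (if i' < n k then complex_of_real (sqrt (r k)) * (complex_of_real (p k i') * \<phi> k i' a * cnj (\<phi> k i' a')) else 0)"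
        proof (cases "i' < n k")
          case True
          have nn: "sqrt (r k) * p k i' \<ge> 0" using rpos np kl True by simp
          have "complex_of_real (s k i') * complex_of_real (s k i') = complex_of_real (sqrt (r k) * p k i')"
            unfolding s_def using nn by (simp flip: of_real_mult)
          then show ?thesis using True \<open>k = l\<close> by (simp add: \<psi>_def algebra_simps)
        qed (simp add: \<psi>_def \<open>k = l\<close>)
      qed
      also have "\<dots> = (\<Sum>i'<n k. complex_of_real (sqrt (r k)) * (complex_of_real (p k i') * \<phi> k i' a * cnj (\<phi> k i' a')))"
        using nM[OF kl(1)] by (intro sum.mono_neutral_cong_right) auto
      finally show ?thesis using True by (simp add: \<rho>_def sum_distrib_left)
    qed (simp add: \<psi>_def)
    finally show ?thesis .
  qed
  show ?thesis unfolding doubly_dilated_def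
  proof (intro exI conjI allI impI)
    show "finite IB" unfolding IB_def by simp
    show "finite {..<m}" by simp
    show "{..<m} \<noteq> {}" using m by (metis lessThan_iff less_le_trans not_one_le_zero less_numeral_extra(1) empty_iff linorder_not_le)
    have "M \<ge> 1" using nM[of 0] np m by force
    then have "(0, 0) \<in> {..<m} \<times> {..<M}" using m by auto
    then show "IB \<noteq> {}" unfolding IB_def by blast
    fix a1 a2 a3 a4 assume a: "a1 < d" "a2 < d" "a3 < d" "a4 < d"
    have "(\<Sum>k\<in>{..<m}. \<Sum>l\<in>{..<m}. \<Sum>i\<in>IB. \<Sum>j\<in>IB.
              \<psi> a1 i k * cnj (\<psi> a2 i l) * \<psi> a3 j l * cnj (\<psi> a4 j k))
        = (\<Sum>k\<in>{..<m}. \<Sum>l\<in>{..<m}. (\<Sum>i\<in>IB. \<psi> a1 i k * cnj (\<psi> a2 i l)) * (\<Sum>j\<in>IB. \<psi> a3 j l * cnj (\<psi> a4 j k)))"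
      by (simp add: sum_product mult.assoc)
    also have "\<dots> = (\<Sum>k\<in>{..<m}. \<Sum>l\<in>{..<m}. if k = l then complex_of_real (sqrt (r k)) * \<rho> k a1 a2 * (complex_of_real (sqrt (r k)) * \<rho> k a3 a4) else 0)"
      by (intro sum.cong refl) (auto simp: key)
    also have "\<dots> = (\<Sum>k<m. complex_of_real (r k) * \<rho> k a1 a2 * \<rho> k a3 a4)"
    proof (intro sum.cong refl)
      fix k assume k: "k \<in> {..<m}"
      have "complex_of_real (sqrt (r k)) * complex_of_real (sqrt (r k)) = complex_of_real (r k)"
        using rpos k by (simp flip: of_real_mult)
      then show "(\<Sum>l\<in>{..<m}. if k = l then complex_of_real (sqrt (r k)) * \<rho> k a1 a2 * (complex_of_real (sqrt (r k)) * \<rho> k a3 a4) else 0)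
          = complex_of_real (r k) * \<rho> k a1 a2 * \<rho> k a3 a4"
        using k by (simp add: algebra_simps)
    qed
    also have "\<dots> = \<Psi> a1 a2 a3 a4" using eq a by (simp add: \<rho>_def)
    finally show "\<Psi> a1 a2 a3 a4 = (\<Sum>k\<in>{..<m}. \<Sum>l\<in>{..<m}. \<Sum>i\<in>IB. \<Sum>j\<in>IB.
              \<psi> a1 i k * cnj (\<psi> a2 i l) * \<psi> a3 j l * cnj (\<psi> a4 j k))" by simp
  qed
qed

end
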